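(* Let $\mathfrak R=(\mathcal B,\mathcal S,\pi)$ be a return risk measurement regime and assume that each of the sets $\mathcal C$, $\mathcal B$, $\mathcal S$ is logconvex, i.e. for $\mathcal D\in\{\mathcal C,\mathcal B,\mathcal S\}$: $X,Y\in\mathcal D$ and $\alpha\in(0,1)$ imply $X^\alpha Y^{1-\alpha}\in\mathcal D$. (i) If $\pi$ is quasi-logconvex, i.e. $\pi(X^\alpha Y^{1-\alpha})\le\max\{\pi(X),\pi(Y)\}$ for all $X,Y\in\mathcal S$, $\alpha\in(0,1)$, then $\eta_{\mathfrak R}$ is quasi-logconvex: $\eta_{\mathfrak R}(X^\alpha Y^{1-\alpha})\le\max\{\eta_{\mathfrak R}(X),\eta_{\mathfrak R}(Y)\}$ for all $X,Y\in\mathcal C$, $\alpha\in(0,1)$. (ii) If $\pi$ is logconvex, i.e. $\pi(X^\alpha Y^{1-\alpha})\le\pi(X)^\alpha\pi(Y)^{1-\alpha}$ for all $X,Y\in\mathcal S$, $\alpha\in(0,1)$, then $\eta_{\mathfrak R}$ is logconvex: $\eta_{\mathfrak R}(X^\alpha Y^{1-\alpha})\le\eta_{\mathfrak R}(X)^\alpha\eta_{\mathfrak R}(Y)^{1-\alpha}$ for all $X,Y\in\mathcal C$, $\alpha\in(0,1)$.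
   Context: Let $(\Omega,\mathcal F,P)$ be a probability space, $L^0$ the space of real random variables with the a.s. order, $L^0_{++}=\{X\in L^0:X>0\text{ a.s.}\}$, and $\frac{\mathcal A}{\mathcal D}=\{AD^{-1}:A\in\mathcal A,D\in\mathcal D\}$. Setting: nonempty sets $\mathcal C,\mathcal S,\mathcal K\subset L^0_{++}$ (model set, security set, set of relative losses) with $\frac{\mathcal C}{\mathcal S}\subset\mathcal K$; a pricing map $\pi\colon\mathcal S\to(0,\infty)$; a relative acceptance set $\mathcal B$, i.e. a nonempty proper subset of $\mathcal K$ such that $X\in\mathcal B$, $Y\in\mathcal K$, $Y\le X$ imply $Y\in\mathcal B$. $\mathfrak R=(\mathcal B,\mathcal S,\pi)$ is a return risk measurement regime, and $\eta_{\mathfrak R}(X)=\inf\{\pi(Z):Z\in\mathcal S,\ X/Z\in\mathcal B\}\in[0,\infty]$, $X\in\mathcal C$ ($\inf\emptyset=\infty$), is the MARRM. Conventions in $[0,\infty]$: $\infty^\alpha=\infty$ for $\alpha>0$, $0\cdot\infty$ is interpreted so that products involving $\infty$ with a positive factor are $\infty$. *)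

theory Defs
  imports "HOL-Probability.Probability"
begin

text \<open>Random variables are represented by measurable real functions on the sample
space; the order on L0 is the almost sure order. Strictly positive random variables:\<close>
definition L0pp :: "'a measure \<Rightarrow> ('a \<Rightarrow> real) set" where
  "L0pp M = {X. X \<in> borel_measurable M \<and> (AE \<omega> in M. X \<omega> > 0)}"

definition ratios :: "('a \<Rightarrow> real) set \<Rightarrow> ('a \<Rightarrow> real) set \<Rightarrow> ('a \<Rightarrow> real) set" where
  "ratios A D = {(\<lambda>\<omega>. X \<omega> / Z \<omega>) | X Z. X \<in> A \<and> Z \<in> D}"

definition rel_acceptance_set :: "'a measure \<Rightarrow> ('a \<Rightarrow> real) set \<Rightarrow> ('a \<Rightarrow> real) set \<Rightarrow> bool" where
  "rel_acceptance_set M K B \<longleftrightarrow> B \<noteq> {} \<and> B \<subset> K \<and>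
     (\<forall>X Y. X \<in> B \<longrightarrow> Y \<in> K \<longrightarrow> (AE \<omega> in M. Y \<omega> \<le> X \<omega>) \<longrightarrow> Y \<in> B)"

definition geo :: "real \<Rightarrow> ('a \<Rightarrow> real) \<Rightarrow> ('a \<Rightarrow> real) \<Rightarrow> ('a \<Rightarrow> real)" where
  "geo a X Y = (\<lambda>\<omega>. X \<omega> powr a * Y \<omega> powr (1 - a))"

definition logconvex_set :: "('a \<Rightarrow> real) set \<Rightarrow> bool" where
  "logconvex_set D \<longleftrightarrow> (\<forall>X\<in>D. \<forall>Y\<in>D. \<forall>a::real. 0 < a \<and> a < 1 \<longrightarrow> geo a X Y \<in> D)"

text \<open>The MARRM with values in [0,\<infinity>] (Inf of empty set is \<infinity>).\<close>
definition eta :: "('a \<Rightarrow> real) set \<Rightarrow> ('a \<Rightarrow> real) set \<Rightarrow> (('a \<Rightarrow> real) \<Rightarrow> real)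
     \<Rightarrow> ('a \<Rightarrow> real) \<Rightarrow> ennreal" where
  "eta B S \<pi> X = Inf {ennreal (\<pi> Z) | Z. Z \<in> S \<and> (\<lambda>\<omega>. X \<omega> / Z \<omega>) \<in> B}"

definition egeo :: "real \<Rightarrow> ennreal \<Rightarrow> ennreal \<Rightarrow> ennreal" where
  "egeo a x y = (if x = \<top> \<or> y = \<top> then \<top>
                 else ennreal (enn2real x powr a * enn2real y powr (1 - a)))"

end

theory Submission
  imports Defs
begin

lemma key:
  assumes CL: "C \<subseteq> L0pp M" and SL: "S \<subseteq> L0pp M"
    and rat: "ratios C S \<subseteq> K"
    and acc: "rel_acceptance_set M K B"
    and lC: "logconvex_set C" and lB: "logconvex_set B" and lS: "logconvex_set S"
    and X: "X \<in> C" and Y: "Y \<in> C" and Z1: "Z1 \<in> S" and Z2: "Z2 \<in> S"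
    and B1: "(\<lambda>\<omega>. X \<omega> / Z1 \<omega>) \<in> B" and B2: "(\<lambda>\<omega>. Y \<omega> / Z2 \<omega>) \<in> B"
    and a: "0 < a" "a < 1"
  shows "geo a Z1 Z2 \<in> S \<and> (\<lambda>\<omega>. geo a X Y \<omega> / geo a Z1 Z2 \<omega>) \<in> B"
proof -
  have gS: "geo a Z1 Z2 \<in> S" using lS Z1 Z2 a unfolding logconvex_set_def by blast
  have gC: "geo a X Y \<in> C" using lC X Y a unfolding logconvex_set_def by blast
  have gB: "geo a (\<lambda>\<omega>. X \<omega> / Z1 \<omega>) (\<lambda>\<omega>. Y \<omega> / Z2 \<omega>) \<in> B"
    using lB B1 B2 a unfolding logconvex_set_def by blast
  have inK: "(\<lambda>\<omega>. geo a X Y \<omega> / geo a Z1 Z2 \<omega>) \<in> K"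
    using rat gS gC unfolding ratios_def by blast
  have ae: "AE \<omega> in M. X \<omega> > 0" "AE \<omega> in M. Y \<omega> > 0" "AE \<omega> in M. Z1 \<omega> > 0" "AE \<omega> in M. Z2 \<omega> > 0"
    using CL SL X Y Z1 Z2 unfolding L0pp_def by auto
  have "AE \<omega> in M. geo a X Y \<omega> / geo a Z1 Z2 \<omega> \<le> geo a (\<lambda>\<omega>. X \<omega> / Z1 \<omega>) (\<lambda>\<omega>. Y \<omega> / Z2 \<omega>) \<omega>"
    using ae(1) ae(2) ae(3) ae(4)
  proof eventually_elim
    case (elim \<omega>)
    then show ?case unfolding geo_def by (simp add: powr_divide)
  qed
  with acc gB inK have "(\<lambda>\<omega>. geo a X Y \<omega> / geo a Z1 Z2 \<omega>) \<in> B"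
    unfolding rel_acceptance_set_def by blast
  with gS show ?thesis by blast
qed

lemma bound:
  assumes "geo a Z1 Z2 \<in> S \<and> (\<lambda>\<omega>. geo a X Y \<omega> / geo a Z1 Z2 \<omega>) \<in> B"
  shows "eta B S \<pi> (geo a X Y) \<le> ennreal (\<pi> (geo a Z1 Z2))"
  unfolding eta_def using assms by (intro Inf_lower) blast

theorem mainTheorem5:
  fixes M :: "'a measure"
    and C S K B :: "('a \<Rightarrow> real) set"
    and \<pi> :: "('a \<Rightarrow> real) \<Rightarrow> real"
  assumes "prob_space M"
    and "C \<noteq> {}" "S \<noteq> {}" "K \<noteq> {}"
    and "C \<subseteq> L0pp M" "S \<subseteq> L0pp M" "K \<subseteq> L0pp M"
    and "ratios C S \<subseteq> K"
    and "\<forall>Z\<in>S. \<pi> Z > 0"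
    and "rel_acceptance_set M K B"
    and "logconvex_set C" "logconvex_set B" "logconvex_set S"
  shows "((\<forall>X\<in>S. \<forall>Y\<in>S. \<forall>a::real. 0 < a \<and> a < 1 \<longrightarrow>
             \<pi> (geo a X Y) \<le> max (\<pi> X) (\<pi> Y)) \<longrightarrow>
          (\<forall>X\<in>C. \<forall>Y\<in>C. \<forall>a::real. 0 < a \<and> a < 1 \<longrightarrow>
             eta B S \<pi> (geo a X Y) \<le> max (eta B S \<pi> X) (eta B S \<pi> Y)))
       \<and> ((\<forall>X\<in>S. \<forall>Y\<in>S. \<forall>a::real. 0 < a \<and> a < 1 \<longrightarrow>
             \<pi> (geo a X Y) \<le> \<pi> X powr a * \<pi> Y powr (1 - a)) \<longrightarrow>
          (\<forall>X\<in>C. \<forall>Y\<in>C. \<forall>a::real. 0 < a \<and> a < 1 \<longrightarrow>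
             eta B S \<pi> (geo a X Y) \<le> egeo a (eta B S \<pi> X) (eta B S \<pi> Y)))"
proof -
  have KB: "\<And>X Y Z1 Z2 (a::real). X \<in> C \<Longrightarrow> Y \<in> C \<Longrightarrow> Z1 \<in> S \<Longrightarrow> Z2 \<in> S \<Longrightarrow>
      (\<lambda>\<omega>. X \<omega> / Z1 \<omega>) \<in> B \<Longrightarrow> (\<lambda>\<omega>. Y \<omega> / Z2 \<omega>) \<in> B \<Longrightarrow> 0 < a \<Longrightarrow> a < 1 \<Longrightarrow>
      geo a Z1 Z2 \<in> S \<and> eta B S \<pi> (geo a X Y) \<le> ennreal (\<pi> (geo a Z1 Z2))"
  proof -
    fix X Y Z1 Z2 and a :: real
    assume h: "X \<in> C" "Y \<in> C" "Z1 \<in> S" "Z2 \<in> S" "(\<lambda>\<omega>. X \<omega> / Z1 \<omega>) \<in> B"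
      "(\<lambda>\<omega>. Y \<omega> / Z2 \<omega>) \<in> B" "0 < a" "a < 1"
    have k: "geo a Z1 Z2 \<in> S \<and> (\<lambda>\<omega>. geo a X Y \<omega> / geo a Z1 Z2 \<omega>) \<in> B"
      by (rule key[OF assms(5,6,8,10,11,12,13) h])
    then show "geo a Z1 Z2 \<in> S \<and> eta B S \<pi> (geo a X Y) \<le> ennreal (\<pi> (geo a Z1 Z2))"
      using bound[OF k] by blast
  qed
  have etaI: "\<And>X t. eta B S \<pi> X < t \<Longrightarrow> \<exists>Z. Z \<in> S \<and> (\<lambda>\<omega>. X \<omega> / Z \<omega>) \<in> B \<and> ennreal (\<pi> Z) < t"
    unfolding eta_def by (auto simp: Inf_less_iff)
  have P1: "(\<forall>X\<in>S. \<forall>Y\<in>S. \<forall>a::real. 0 < a \<and> a < 1 \<longrightarrow>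
             \<pi> (geo a X Y) \<le> max (\<pi> X) (\<pi> Y)) \<longrightarrow>
          (\<forall>X\<in>C. \<forall>Y\<in>C. \<forall>a::real. 0 < a \<and> a < 1 \<longrightarrow>
             eta B S \<pi> (geo a X Y) \<le> max (eta B S \<pi> X) (eta B S \<pi> Y))"
  proof (intro impI ballI allI)
    fix X Y and a :: real
    assume pq: "\<forall>X\<in>S. \<forall>Y\<in>S. \<forall>a::real. 0 < a \<and> a < 1 \<longrightarrow> \<pi> (geo a X Y) \<le> max (\<pi> X) (\<pi> Y)"
      and X: "X \<in> C" and Y: "Y \<in> C"
    assume a: "0 < a \<and> a < 1"
    show "eta B S \<pi> (geo a X Y) \<le> max (eta B S \<pi> X) (eta B S \<pi> Y)"
    proof -
      show ?thesis
      proof (rule dense_ge)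
        fix t assume "max (eta B S \<pi> X) (eta B S \<pi> Y) < t"
        then obtain Z1 Z2 where z1: "Z1 \<in> S" "(\<lambda>\<omega>. X \<omega> / Z1 \<omega>) \<in> B" "ennreal (\<pi> Z1) < t"
          and z2: "Z2 \<in> S" "(\<lambda>\<omega>. Y \<omega> / Z2 \<omega>) \<in> B" "ennreal (\<pi> Z2) < t"
          using etaI[of X t] etaI[of Y t] by auto
        have e: "eta B S \<pi> (geo a X Y) \<le> ennreal (\<pi> (geo a Z1 Z2))"
          using KB[OF X Y z1(1) z2(1) z1(2) z2(2)] a by blast
        have "\<pi> (geo a Z1 Z2) \<le> max (\<pi> Z1) (\<pi> Z2)" using pq z1 z2 a by blast
        then have "ennreal (\<pi> (geo a Z1 Z2)) < t"
        proof (cases "\<pi> Z1 \<le> \<pi> Z2")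
          case True
          then have "ennreal (\<pi> (geo a Z1 Z2)) \<le> ennreal (\<pi> Z2)"
            using \<open>\<pi> (geo a Z1 Z2) \<le> max (\<pi> Z1) (\<pi> Z2)\<close> by (intro ennreal_leI) simp
          then show ?thesis using z2(3) by (rule le_less_trans)
        next
          case False
          then have "ennreal (\<pi> (geo a Z1 Z2)) \<le> ennreal (\<pi> Z1)"
            using \<open>\<pi> (geo a Z1 Z2) \<le> max (\<pi> Z1) (\<pi> Z2)\<close> by (intro ennreal_leI) simp
          then show ?thesis using z1(3) by (rule le_less_trans)
        qed
        then show "eta B S \<pi> (geo a X Y) \<le> t" using e by simp
      qed
    qed
  qed
  have P2: "(\<forall>X\<in>S. \<forall>Y\<in>S. \<forall>a::real. 0 < a \<and> a < 1 \<longrightarrow>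
             \<pi> (geo a X Y) \<le> \<pi> X powr a * \<pi> Y powr (1 - a)) \<longrightarrow>
          (\<forall>X\<in>C. \<forall>Y\<in>C. \<forall>a::real. 0 < a \<and> a < 1 \<longrightarrow>
             eta B S \<pi> (geo a X Y) \<le> egeo a (eta B S \<pi> X) (eta B S \<pi> Y))"
  proof (intro impI ballI allI)
    fix X Y and a :: real
    assume pq: "\<forall>X\<in>S. \<forall>Y\<in>S. \<forall>a::real. 0 < a \<and> a < 1 \<longrightarrow> \<pi> (geo a X Y) \<le> \<pi> X powr a * \<pi> Y powr (1 - a)"
      and X: "X \<in> C" and Y: "Y \<in> C"
    assume a: "0 < a \<and> a < 1"
    show "eta B S \<pi> (geo a X Y) \<le> egeo a (eta B S \<pi> X) (eta B S \<pi> Y)"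
    proof (cases "eta B S \<pi> X = \<top> \<or> eta B S \<pi> Y = \<top>")
      case True then show ?thesis by (simp add: egeo_def)
    next
      case False
      define e1 where "e1 = enn2real (eta B S \<pi> X)"
      define e2 where "e2 = enn2real (eta B S \<pi> Y)"
      have E1: "eta B S \<pi> X = ennreal e1" and E2: "eta B S \<pi> Y = ennreal e2"
        using False unfolding e1_def e2_def by (auto simp: less_top)
      have e1p: "e1 \<ge> 0" "e2 \<ge> 0" unfolding e1_def e2_def by auto
      define f where "f = (\<lambda>d::real. (e1 + d) powr a * (e2 + d) powr (1 - a))"
      have bd: "eta B S \<pi> (geo a X Y) \<le> ennreal (f d)" if d: "d > 0" for d
      proof -
        have "eta B S \<pi> X < ennreal (e1 + d)" using E1 d e1p by (simp add: ennreal_lessI)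
        then obtain Z1 where z1: "Z1 \<in> S" "(\<lambda>\<omega>. X \<omega> / Z1 \<omega>) \<in> B" "ennreal (\<pi> Z1) < ennreal (e1 + d)"
          using etaI by blast
        have "eta B S \<pi> Y < ennreal (e2 + d)" using E2 d e1p by (simp add: ennreal_lessI)
        then obtain Z2 where z2: "Z2 \<in> S" "(\<lambda>\<omega>. Y \<omega> / Z2 \<omega>) \<in> B" "ennreal (\<pi> Z2) < ennreal (e2 + d)"
          using etaI by blast
        have p1: "\<pi> Z1 > 0" "\<pi> Z2 > 0" using assms(9) z1 z2 by auto
        have l1: "\<pi> Z1 \<le> e1 + d" "\<pi> Z2 \<le> e2 + d" using z1(3) z2(3) p1
          by (auto simp: ennreal_less_iff less_imp_le)
        have e: "eta B S \<pi> (geo a X Y) \<le> ennreal (\<pi> (geo a Z1 Z2))"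
          using KB[OF X Y z1(1) z2(1) z1(2) z2(2)] a by blast
        have "\<pi> (geo a Z1 Z2) \<le> \<pi> Z1 powr a * \<pi> Z2 powr (1 - a)" using pq z1 z2 a by blast
        also have "\<dots> \<le> f d" unfolding f_def
          using l1 p1 a by (intro mult_mono powr_mono2) auto
        finally show ?thesis using e by (meson ennreal_leI order_trans)
      qed
      have fin: "eta B S \<pi> (geo a X Y) \<noteq> \<top>" 
      proof
        assume "eta B S \<pi> (geo a X Y) = \<top>"
        then have "\<top> \<le> ennreal (f 1)" using bd[of 1] by simp
        then show False by (simp add: top_unique)
      qed
      define r where "r = enn2real (eta B S \<pi> (geo a X Y))"
      have R: "eta B S \<pi> (geo a X Y) = ennreal r" "r \<ge> 0" using fin unfolding r_def by (auto simp: less_top)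
      have rb: "r \<le> f d" if "d > 0" for d
        proof -
        have "f d \<ge> 0" unfolding f_def by simp
        then show ?thesis using bd[OF that] R by simp
      qed
      have lim: "(f \<longlongrightarrow> f 0) (at_right 0)"
        unfolding f_def using e1p a
        by (intro tendsto_intros tendsto_powr2) (auto simp: eventually_at_right_less eventually_at_filter)
      have "r \<le> f 0"
        by (rule tendsto_lowerbound[OF lim]) (auto simp: eventually_at_filter rb)
      then show ?thesis using R False E1 E2 e1p
        by (simp add: egeo_def f_def ennreal_leI)
    qed
  qed
  show ?thesis using P1 P2 by blast
qed

end
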